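(* For every planar tree $t$, $\mathrm{GD}(t)=\mathrm{GD}(\iota(t))$.
   Context: A planar tree has linearly ordered children at each node, each node being a leaf or having $\ge2$ children (internal node); $\deg t$ = number of leaves minus one. For planar trees $s,r$, $s/r$ is the tree obtained by identifying the root of $s$ with the leftmost leaf of $r$. For $t$ of degree $n$, $\mathrm{GD}(t)=\{i\in\{1,\dots,n-1\}: t=s/r\text{ for some planar trees } s,r \text{ with }\deg s=i\}$. A generalized Stirling permutation (GSP) is a planar tree with a bijection $\kappa$ from its internal nodes to $\{1,\dots,N\}$ increasing from each internal node to its internal children. Its word $\mathbf w(u)=u_1\cdots u_n$: a leaf has empty word; a node $x$ with children $c_1,\dots,c_k$ has word $\mathbf w(c_1)\kappa(x)\mathbf w(c_2)\cdots\kappa(x)\mathbf w(c_k)$. $\mathrm{GD}(u)=\{i\in\{1,\dots,n-1\}: u_a>u_b \text{ for all } a\le i<b\}$. For each planar tree $t$ there is exactly one GSP with underlying tree $t$ whose word is $213$-avoiding (no $i<j<k$ with $w_k>w_i>w_j$); it is denoted $\iota(t)$. *)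

theory Defs
  imports Main
begin

datatype ptree = Leaf | Node "ptree list"

fun wf_ptree :: "ptree \<Rightarrow> bool" where
  "wf_ptree Leaf = True"
| "wf_ptree (Node cs) = (2 \<le> length cs \<and> (\<forall>c\<in>set cs. wf_ptree c))"

fun leaves :: "ptree \<Rightarrow> nat" where
  "leaves Leaf = 1"
| "leaves (Node cs) = sum_list (map leaves cs)"

definition deg :: "ptree \<Rightarrow> nat" where
  "deg t = leaves t - 1"

text \<open>Grafting: s / r identifies the root of s with the leftmost leaf of r.\<close>

fun graft :: "ptree \<Rightarrow> ptree \<Rightarrow> ptree" where
  "graft s Leaf = s"
| "graft s (Node []) = Node []"
| "graft s (Node (c # cs)) = Node (graft s c # cs)"

definition GD_tree :: "ptree \<Rightarrow> nat set" where
  "GD_tree t = {i \<in> {1..deg t - 1}. \<exists>s r. wf_ptree s \<and> wf_ptree r \<and> t = graft s r \<and> deg s = i}"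

datatype ltree = LLeaf | LNode nat "ltree list"

fun erase :: "ltree \<Rightarrow> ptree" where
  "erase LLeaf = Leaf"
| "erase (LNode k cs) = Node (map erase cs)"

fun labels :: "ltree \<Rightarrow> nat list" where
  "labels LLeaf = []"
| "labels (LNode k cs) = k # concat (map labels cs)"

fun increasing :: "ltree \<Rightarrow> bool" where
  "increasing LLeaf = True"
| "increasing (LNode k cs) =
     (\<forall>c\<in>set cs. increasing c \<and> (case c of LLeaf \<Rightarrow> True | LNode k' _ \<Rightarrow> k < k'))"

definition gsp :: "ltree \<Rightarrow> bool" where
  "gsp u \<longleftrightarrow> wf_ptree (erase u) \<and> distinct (labels u)
      \<and> set (labels u) = {1..length (labels u)} \<and> increasing u"

fun word :: "ltree \<Rightarrow> nat list" where
  "word LLeaf = []"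
| "word (LNode k []) = []"
| "word (LNode k (c # cs)) = word c @ concat (map (\<lambda>d. k # word d) cs)"

text \<open>Global descents of a word u_1...u_n (1-indexed; list index a-1).\<close>

definition GD_word :: "nat list \<Rightarrow> nat set" where
  "GD_word w = {i \<in> {1..length w - 1}.
      \<forall>a b. 1 \<le> a \<and> a \<le> i \<and> i < b \<and> b \<le> length w \<longrightarrow> w ! (a - 1) > w ! (b - 1)}"

definition avoids213 :: "nat list \<Rightarrow> bool" where
  "avoids213 w \<longleftrightarrow> \<not> (\<exists>i j k. i < j \<and> j < k \<and> k < length w \<and> w ! k > w ! i \<and> w ! i > w ! j)"

definition iota :: "ptree \<Rightarrow> ltree" where
  "iota t = (THE u. gsp u \<and> erase u = t \<and> avoids213 (word u))"

end

theory Submission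
  imports Defs
begin

fun ni :: "ptree \<Rightarrow> nat" where
  "ni Leaf = 0" | "ni (Node cs) = Suc (sum_list (map ni cs))"
fun mk :: "nat \<Rightarrow> ptree \<Rightarrow> ltree" and mkl :: "nat \<Rightarrow> ptree list \<Rightarrow> ltree list" where
  "mk b Leaf = LLeaf"
| "mk b (Node cs) = LNode b (mkl (Suc b) cs)"
| "mkl b [] = []"
| "mkl b (c # cs) = mk (b + sum_list (map ni cs)) c # mkl b cs"

lemma erase_mk: "erase (mk b t) = t" "map erase (mkl b cs) = cs"
  by (induction b t and b cs rule: mk_mkl.induct) auto

lemma labels_mk:
  "length (labels (mk b t)) = ni t \<and> set (labels (mk b t)) = {b..<b + ni t} \<and> distinct (labels (mk b t))"
  "length (concat (map labels (mkl b cs))) = sum_list (map ni cs) \<and>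
   set (concat (map labels (mkl b cs))) = {b..<b + sum_list (map ni cs)} \<and>
   distinct (concat (map labels (mkl b cs)))"
proof (induction b t and b cs rule: mk_mkl.induct)
  case (2 b cs)
  then show ?case by auto
next
  case (4 b c cs)
  then show ?case by (auto simp: ivl_disj_un)
qed auto

fun root :: "ltree \<Rightarrow> nat" where "root LLeaf = 0" | "root (LNode k _) = k"

lemma incr_mk:
  "increasing (mk b t)"
  "\<forall>c\<in>set (mkl b cs). increasing c \<and> (c = LLeaf \<or> b \<le> root c)"
proof (induction b t and b cs rule: mk_mkl.induct)
  case (2 b cs)
  then show ?case by (force split: ltree.split)
next
  case (4 b c cs)
  then show ?case by (cases c) auto
qed auto

lemma word_labels: "set (word u) \<subseteq> set (labels u)"
proof (induction u rule: word.induct)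
  case (3 k c cs)
  then show ?case by auto
qed auto

lemma word_labels_eq: "wf_ptree (erase u) \<Longrightarrow> set (word u) = set (labels u)"
proof (induction u rule: word.induct)
  case (3 k c cs)
  then show ?case by (cases cs) auto
qed auto
lemma av_suffix: assumes "avoids213 (x @ y)" shows "avoids213 y"
proof (unfold avoids213_def, rule notI, elim exE conjE)
  fix i j k assume h: "i < j" "j < k" "k < length y" "y ! k > y ! i" "y ! i > y ! j"
  show False using assms unfolding avoids213_def
    apply (simp only: not_ex)
    apply (drule spec[of _ "length x + i"], drule spec[of _ "length x + j"], drule spec[of _ "length x + k"])
    using h by (simp add: nth_append)
qed
lemma av_prefix: assumes "avoids213 (x @ y)" shows "avoids213 x"
proof (unfold avoids213_def, rule notI, elim exE conjE)
  fix i j k assume h: "i < j" "j < k" "k < length x" "x ! k > x ! i" "x ! i > x ! j"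
  show False using assms unfolding avoids213_def
    apply (simp only: not_ex)
    apply (drule spec[of _ i], drule spec[of _ j], drule spec[of _ k])
    using h by (simp add: nth_append)
qed
lemma av_append:
  assumes "avoids213 x" "avoids213 y" "\<forall>e\<in>set x. \<forall>f\<in>set y. f < e"
  shows "avoids213 (x @ y)"
proof (unfold avoids213_def, rule notI, elim exE conjE)
  fix i j k assume h: "i < j" "j < k" "k < length (x @ y)" "(x@y) ! k > (x@y) ! i" "(x@y) ! i > (x@y) ! j"
  consider "k < length x" | "length x \<le> i" | "i < length x" "length x \<le> k" by linarith
  then show False
  proof cases
    case 1 then show ?thesis using assms(1) h unfolding avoids213_def by (auto simp: nth_append)
  next
    case 2
    show ?thesis using assms(2) unfolding avoids213_def
      apply (simp only: not_ex)
      apply (drule spec[of _ "i - length x"], drule spec[of _ "j - length x"], drule spec[of _ "k - length x"])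
      using h 2 by (auto simp: nth_append)
  next
    case 3
    then have "x ! i \<in> set x" "y ! (k - length x) \<in> set y" using h by auto
    then have "y ! (k - length x) < x ! i" using assms(3) by (meson)
    then show ?thesis using h 3 by (simp add: nth_append)
  qed
qed
lemma av_cons:
  assumes "avoids213 y" "\<forall>f\<in>set y. m \<le> f"
  shows "avoids213 (m # y)"
proof (unfold avoids213_def, rule notI, elim exE conjE)
  fix i j k assume h: "i < j" "j < k" "k < length (m # y)" "(m#y) ! k > (m#y) ! i" "(m#y) ! i > (m#y) ! j"
  obtain j' where j': "j = Suc j'" using h(1) by (cases j) auto
  obtain k' where k': "k = Suc k'" using h(2) by (cases k) auto
  show False
  proof (cases i)
    case 0
    have "y ! j' \<in> set y" using h(2,3) j' k' by simp
    then have "m \<le> y ! j'" using assms(2) by blast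
    then show ?thesis using h(5) 0 j' by simp
  next
    case (Suc i')
    have "i' < j'" "j' < k'" "k' < length y" using h(1-3) Suc j' k' by simp_all
    moreover have "y ! k' > y ! i'" "y ! i' > y ! j'" using h(4,5) Suc j' k' by simp_all
    ultimately show ?thesis using assms(1) unfolding avoids213_def by blast
  qed
qed
lemma av_block:
  assumes "avoids213 (x @ m # y)" "e \<in> set x" "m < e" "f \<in> set y"
  shows "\<not> e < f"
proof
  assume ef: "e < f"
  obtain p where p: "p < length x" "x ! p = e" using assms(2) by (meson in_set_conv_nth)
  obtain q where q: "q < length y" "y ! q = f" using assms(4) by (meson in_set_conv_nth)
  show False using assms(1) unfolding avoids213_def
    apply (simp only: not_ex)
    apply (drule spec[of _ p], drule spec[of _ "length x"], drule spec[of _ "Suc (length x + q)"])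
    using p q ef assms(3) by (auto simp: nth_append)
qed
lemma GD_split:
  assumes xm: "\<forall>e\<in>set x. m < e" and xy: "\<forall>e\<in>set x. \<forall>f\<in>set y. f < e"
    and my: "\<forall>f\<in>set y. m \<le> f"
  shows "GD_word (x @ m # y) = GD_word x \<union> (if x = [] then {} else {length x})"
proof -
  let ?w = "x @ m # y"
  have lw: "length ?w = length x + Suc (length y)" by simp
  have big: "?w ! (a - 1) > ?w ! (b - 1)" if "1 \<le> a" "a \<le> length x" "length x < b" "b \<le> length ?w" for a b
  proof -
    have e: "?w ! (a - 1) = x ! (a - 1)" "x ! (a - 1) \<in> set x" using that by (auto simp: nth_append)
    show ?thesis
    proof (cases "b - 1 = length x")
      case True
      then show ?thesis using e xm by (simp add: nth_append)
    next
      case False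
      then have "?w ! (b - 1) = y ! (b - 1 - Suc (length x))" "y ! (b - 1 - Suc (length x)) \<in> set y"
        using that by (auto simp: nth_append nth_Cons')
      then show ?thesis using e xy by simp
    qed
  qed
  show ?thesis
  proof (intro set_eqI iffI)
    fix i assume i: "i \<in> GD_word ?w"
    then have i1: "1 \<le> i" "i \<le> length ?w - 1" and P: "\<And>a b. 1 \<le> a \<Longrightarrow> a \<le> i \<Longrightarrow> i < b \<Longrightarrow> b \<le> length ?w \<Longrightarrow> ?w ! (a - 1) > ?w ! (b - 1)"
      unfolding GD_word_def by auto
    consider "i < length x" | "i = length x" | "i > length x" by linarith
    then show "i \<in> GD_word x \<union> (if x = [] then {} else {length x})"
    proof cases
      case 1
      have "i \<in> GD_word x" unfolding GD_word_def
      proof (unfold mem_Collect_eq, intro conjI allI impI)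
        show "i \<in> {1..length x - 1}" using i1 1 by auto
        fix a b assume "1 \<le> a \<and> a \<le> i \<and> i < b \<and> b \<le> length x"
        moreover from this have "b - 1 < length x" "a - 1 < length x" by auto
        ultimately show "x ! (a - 1) > x ! (b - 1)" using P[of a b] 1 by (simp add: nth_append)
      qed
      then show ?thesis by simp
    next
      case 2 then show ?thesis using i1 by auto
    next
      case 3
      have "?w ! (Suc (length x) - 1) > ?w ! (length ?w - 1)" using P[of "Suc (length x)" "length ?w"] 3 i1 by auto
      moreover have "?w ! (length ?w - 1) \<in> set y \<or> length ?w - 1 = length x" by (auto simp: nth_append)
      ultimately show ?thesis using my by (auto simp: nth_append)
    qed
  next
    fix i assume i: "i \<in> GD_word x \<union> (if x = [] then {} else {length x})"
    show "i \<in> GD_word ?w"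
    proof (cases "i \<in> GD_word x")
      case True
      then have i1: "1 \<le> i" "i \<le> length x - 1" and P: "\<And>a b. 1 \<le> a \<Longrightarrow> a \<le> i \<Longrightarrow> i < b \<Longrightarrow> b \<le> length x \<Longrightarrow> x ! (a - 1) > x ! (b - 1)"
        unfolding GD_word_def by auto
      show ?thesis unfolding GD_word_def
      proof (unfold mem_Collect_eq, intro conjI allI impI)
        show "i \<in> {1..length ?w - 1}" using i1 by auto
        fix a b assume ab: "1 \<le> a \<and> a \<le> i \<and> i < b \<and> b \<le> length ?w"
        show "?w ! (a - 1) > ?w ! (b - 1)"
        proof (cases "b \<le> length x")
          case True then show ?thesis using P[of a b] ab i1 by (auto simp: nth_append)
        next
          case False then show ?thesis using big[of a b] ab i1 by auto
        qed
      qed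
    next
      case False
      then have "x \<noteq> []" "i = length x" using i by (auto split: if_splits)
      moreover from this have "1 \<le> length x" by (cases x) auto
      ultimately show ?thesis unfolding GD_word_def using big by auto
    qed
  qed
qed
lemma sum_ge_len: "(\<forall>c\<in>set cs. 1 \<le> f c) \<Longrightarrow> length cs \<le> sum_list (map f cs)"
  by (induction cs) auto

lemma leaves_pos: "wf_ptree t \<Longrightarrow> 1 \<le> leaves t \<and> (t \<noteq> Leaf \<longrightarrow> 2 \<le> leaves t)"
proof (induction t)
  case (Node cs)
  then have "length cs \<le> sum_list (map leaves cs)" by (intro sum_ge_len) auto
  then show ?case using Node.prems by auto
qed auto

lemma leaves_graft: "wf_ptree r \<Longrightarrow> leaves (graft s r) + 1 = leaves s + leaves r"
  by (induction s r rule: graft.induct) auto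

lemma GD_Leaf: "GD_tree Leaf = {}"
  by (simp add: GD_tree_def deg_def)

lemma GD_node:
  assumes wf: "wf_ptree (Node (c # cs))"
  shows "GD_tree (Node (c # cs)) = GD_tree c \<union> (if c = Leaf then {} else {deg c})"
proof -
  have wfc: "wf_ptree c" and wfcs: "\<forall>d\<in>set cs. wf_ptree d" and lcs: "cs \<noteq> []" using wf by auto
  have "length cs \<le> sum_list (map leaves cs)" using wfcs leaves_pos by (intro sum_ge_len) auto
  then have lt: "leaves (Node (c # cs)) \<ge> leaves c + 1" using lcs by (cases cs) auto
  show ?thesis
  proof (intro set_eqI iffI)
    fix i assume "i \<in> GD_tree (Node (c # cs))"
    then obtain s r where i: "1 \<le> i" "i \<le> deg (Node (c # cs)) - 1" and sr: "wf_ptree s" "wf_ptree r"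
      "Node (c # cs) = graft s r" "deg s = i" unfolding GD_tree_def by auto
    show "i \<in> GD_tree c \<union> (if c = Leaf then {} else {deg c})"
    proof (cases r)
      case Leaf
      then show ?thesis using i sr by simp
    next
      case (Node ds)
      then obtain d ds' where r: "r = Node (d # ds')" using sr(2) by (cases ds) auto
      then have cd: "c = graft s d" "cs = ds'" and wfd: "wf_ptree d" using sr by auto
      show ?thesis
      proof (cases "d = Leaf")
        case True
        then have "c = s" using cd by simp
        then show ?thesis using sr(4) i by (auto simp: deg_def)
      next
        case False
        have "leaves c + 1 = leaves s + leaves d" using cd leaves_graft wfd by simp
        moreover have "2 \<le> leaves d" using leaves_pos[OF wfd] False by simp
        ultimately have "i \<le> deg c - 1" using sr(4) by (simp add: deg_def)
        then have "i \<in> GD_tree c" unfolding GD_tree_def using i cd sr wfd by auto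
        then show ?thesis by simp
      qed
    qed
  next
    fix i assume "i \<in> GD_tree c \<union> (if c = Leaf then {} else {deg c})"
    then consider "i \<in> GD_tree c" | "c \<noteq> Leaf" "i = deg c" by (auto split: if_splits)
    then show "i \<in> GD_tree (Node (c # cs))"
    proof cases
      case 1
      then obtain s d where i: "1 \<le> i" "i \<le> deg c - 1" and sr: "wf_ptree s" "wf_ptree d"
        "c = graft s d" "deg s = i" unfolding GD_tree_def by auto
      have "wf_ptree (Node (d # cs))" using wf sr by auto
      moreover have "Node (c # cs) = graft s (Node (d # cs))" using sr by simp
      moreover have "i \<le> deg (Node (c # cs)) - 1" using i lt by (simp add: deg_def)
      ultimately have "wf_ptree s \<and> wf_ptree (Node (d # cs)) \<and> Node (c # cs) = graft s (Node (d # cs)) \<and> deg s = i"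
        "i \<in> {1..deg (Node (c # cs)) - 1}" using i sr by auto
      then show ?thesis unfolding GD_tree_def mem_Collect_eq
        apply - apply (rule conjI, assumption)
        apply (rule exI[of _ s], rule exI[of _ "Node (d # cs)"], assumption) done
    next
      case 2
      have "2 \<le> leaves c" using leaves_pos[OF wfc] 2 by simp
      then have B: "i \<in> {1..deg (Node (c # cs)) - 1}" using 2 lt by (auto simp: deg_def)
      have w: "wf_ptree (Node (Leaf # cs))" using wf by auto
      have A: "wf_ptree c \<and> wf_ptree (Node (Leaf # cs)) \<and> Node (c # cs) = graft c (Node (Leaf # cs)) \<and> deg c = i"
        using wfc w 2(2) by simp
      show ?thesis unfolding GD_tree_def mem_Collect_eq
        apply (rule conjI, rule B)
        apply (rule exI[of _ c], rule exI[of _ "Node (Leaf # cs)"], rule A) done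
    qed
  qed
qed
lemma len_word: "wf_ptree (erase u) \<Longrightarrow> length (word u) + 1 = leaves (erase u)"
proof (induction u rule: word.induct)
  case (3 k c cs)
  have "length (concat (map (\<lambda>d. k # word d) cs)) = sum_list (map (\<lambda>d. Suc (length (word d))) cs)"
    by (simp add: length_concat comp_def)
  also have "\<dots> = sum_list (map (\<lambda>d. leaves (erase d)) cs)"
    using 3 by (intro arg_cong[where f=sum_list] map_cong) auto
  finally show ?case using 3 by (simp add: comp_def)
qed auto

lemma deg_zero: "wf_ptree t \<Longrightarrow> deg t = 0 \<longleftrightarrow> t = Leaf"
  using leaves_pos[of t] by (auto simp: deg_def)

lemma set_concat_word: "set (concat (map (\<lambda>d. m # word d) ds)) \<subseteq> insert m (set (concat (map labels ds)))"
proof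
  fix x assume "x \<in> set (concat (map (\<lambda>d. m # word d) ds))"
  then obtain d where "d \<in> set ds" "x = m \<or> x \<in> set (word d)" by (auto split: if_splits, metis list.set_intros(1) neq_Nil_conv)
  then show "x \<in> insert m (set (concat (map labels ds)))" using word_labels[of d] by auto
qed

lemma GD_mk: "wf_ptree t \<Longrightarrow> GD_word (word (mk b t)) = GD_tree t"
proof (induction t arbitrary: b)
  case Leaf
  then show ?case by (simp add: GD_Leaf GD_word_def)
next
  case (Node cs)
  obtain c cs' where cs: "cs = c # cs'" and cs': "cs' \<noteq> []" using Node.prems
    by (cases cs; cases "tl cs") auto
  have wfc: "wf_ptree c" using Node.prems cs by simp
  define S where "S = sum_list (map ni cs')"
  define X where "X = mk (Suc b + S) c"
  define Z where "Z = concat (map (\<lambda>d. b # word d) (mkl (Suc b) cs'))"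
  have mkeq: "mk b (Node cs) = LNode b (X # mkl (Suc b) cs')" unfolding X_def S_def cs by simp
  have wd: "word (mk b (Node cs)) = word X @ Z" unfolding mkeq Z_def by simp
  obtain Y Ys where "mkl (Suc b) cs' = Y # Ys" using cs' by (cases cs') auto
  then have Zc: "Z = b # tl Z" unfolding Z_def by simp
  have setZ: "set Z \<subseteq> insert b {Suc b..<Suc b + S}"
    using set_concat_word[of b "mkl (Suc b) cs'"] labels_mk(2)[of "Suc b" cs'] unfolding Z_def S_def by auto
  have setX: "set (word X) \<subseteq> {Suc b + S..<Suc b + S + ni c}"
    using word_labels[of X] labels_mk(1)[of "Suc b + S" c] unfolding X_def by auto
  have "set (tl Z) \<subseteq> set Z" using Zc by (metis set_subset_Cons)
  then have h1: "\<forall>e\<in>set (word X). b < e" "\<forall>e\<in>set (word X). \<forall>f\<in>set (tl Z). f < e" "\<forall>f\<in>set (tl Z). b \<le> f"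
    using setX setZ by fastforce+
  have "GD_word (word (mk b (Node cs))) = GD_word (word X @ b # tl Z)" using wd Zc by simp
  also have "\<dots> = GD_word (word X) \<union> (if word X = [] then {} else {length (word X)})"
    by (rule GD_split[OF h1])
  also have "GD_word (word X) = GD_tree c" unfolding X_def using Node.IH[of c] cs wfc by simp
  also have "length (word X) = deg c" using len_word[of X] wfc unfolding X_def erase_mk deg_def by simp
  also have "(word X = []) = (c = Leaf)" using \<open>length (word X) = deg c\<close> deg_zero[OF wfc] by auto
  finally show ?case using GD_node Node.prems cs by simp
qed
lemma av_nil: "avoids213 []" by (simp add: avoids213_def)

lemma av_mk:
  "avoids213 (word (mk b t))"
  "\<forall>m<b. avoids213 (concat (map (\<lambda>d. m # word d) (mkl b cs)))"
proof (induction b t and b cs rule: mk_mkl.induct)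
  case (1 b) then show ?case by (simp add: av_nil)
next
  case (2 b cs)
  show ?case
  proof (cases "mkl (Suc b) cs")
    case Nil then show ?thesis by (simp add: av_nil)
  next
    case (Cons X Xs)
    have "avoids213 ([b] @ (word X @ concat (map (\<lambda>d. b # word d) Xs)))"
      using 2[rule_format, of b] Cons by simp
    then show ?thesis using Cons by (simp add: av_suffix[of "[b]"])
  qed
next
  case (3 b) then show ?case by (simp add: av_nil)
next
  case (4 b c cs)
  show ?case
  proof (intro allI impI)
    fix m assume m: "m < b"
    define S where "S = sum_list (map ni cs)"
    define Y where "Y = concat (map (\<lambda>d. m # word d) (mkl b cs))"
    have setY: "set Y \<subseteq> insert m {b..<b + S}"
      using set_concat_word[of m "mkl b cs"] labels_mk(2)[of b cs] unfolding Y_def S_def by auto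
    have setX: "set (word (mk (b + S) c)) \<subseteq> {b + S..<b + S + ni c}"
      using word_labels[of "mk (b + S) c"] labels_mk(1)[of "b + S" c] by auto
    have "avoids213 (word (mk (b + S) c) @ Y)"
      apply (rule av_append)
      using 4(1) 4(2) m setX setY unfolding S_def Y_def by fastforce+
    moreover have "\<forall>f\<in>set (word (mk (b + S) c) @ Y). m \<le> f" using setX setY m by fastforce
    ultimately have "avoids213 (m # (word (mk (b + S) c) @ Y))" by (rule av_cons)
    then show "avoids213 (concat (map (\<lambda>d. m # word d) (mkl b (c # cs))))"
      unfolding Y_def S_def by simp
  qed
qed

lemma gsp_mk: "wf_ptree t \<Longrightarrow> gsp (mk 1 t)"
  unfolding gsp_def using labels_mk(1)[of 1 t] incr_mk(1)[of 1 t] erase_mk(1)[of 1 t]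
  by (auto simp: atLeastLessThanSuc_atLeastAtMost)
lemma len_labels: "length (labels u) = ni (erase u)"
proof (induction u)
  case (LNode k cs)
  have "length (concat (map labels cs)) = sum_list (map (\<lambda>c. length (labels c)) cs)"
    by (simp add: length_concat comp_def)
  also have "\<dots> = sum_list (map (\<lambda>c. ni (erase c)) cs)"
    using LNode by (intro arg_cong[where f=sum_list] map_cong) auto
  finally show ?case by (simp add: comp_def)
qed simp

lemma incr_root: "increasing u \<Longrightarrow> x \<in> set (labels u) \<Longrightarrow> root u \<le> x"
proof (induction u arbitrary: x)
  case (LNode k cs)
  show ?case
  proof (cases "x = k")
    case False
    then obtain c where c: "c \<in> set cs" "x \<in> set (labels c)" using LNode.prems by auto
    then obtain k' cs' where c': "c = LNode k' cs'" by (cases c rule: ltree.exhaust) auto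
    have "k < k'" using LNode.prems(1) c c' by fastforce
    moreover have "k' \<le> x" using LNode.IH[OF c(1)] LNode.prems(1) c c' by fastforce
    ultimately show ?thesis by simp
  qed simp
qed simp

lemma child_gt: "increasing (LNode k cs) \<Longrightarrow> c \<in> set cs \<Longrightarrow> e \<in> set (labels c) \<Longrightarrow> k < e"
proof -
  assume a: "increasing (LNode k cs)" "c \<in> set cs" "e \<in> set (labels c)"
  then obtain k' cs' where c': "c = LNode k' cs'" by (cases c rule: ltree.exhaust) auto
  have "k < k'" using a c' by fastforce
  moreover have "k' \<le> e" using incr_root[of c e] a c' by fastforce
  ultimately show "k < e" by simp
qed

lemma ivl_split:
  fixes A B :: "nat set"
  assumes u: "A \<union> B = {a..<a+n}" and d: "A \<inter> B = {}" and lt: "\<forall>x\<in>A. \<forall>y\<in>B. y < x"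
  shows "B = {a..<a + card B}" "A = {a + card B..<a+n}"
proof -
  have fB: "finite B" using u by (metis finite_Un finite_atLeastLessThan)
  have sub: "{a..<a + card B} \<subseteq> B"
  proof
    fix x assume x: "x \<in> {a..<a + card B}"
    show "x \<in> B"
    proof (rule ccontr)
      assume "x \<notin> B"
      have "B \<subseteq> {a..<a+n}" using u by blast
      then have "card B \<le> n" using card_mono[of "{a..<a+n}" B] by simp
      then have "x \<in> A" using x u \<open>x \<notin> B\<close> by auto
      then have "B \<subseteq> {a..<x}" using lt u by fastforce
      then have "card B \<le> x - a" using card_mono[of "{a..<x}" B] by simp
      then show False using x by auto
    qed
  qed
  then show B: "B = {a..<a + card B}" using fB by (intro card_subset_eq[symmetric]) auto
  show "A = {a + card B..<a+n}"
  proof -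
    have "A = {a..<a+n} - B" using u d by blast
    also have "\<dots> = {a..<a+n} - {a..<a + card B}" using B by simp
    also have "\<dots> = {a + card B..<a+n}" by auto
    finally show ?thesis .
  qed
qed
lemma inner:
  assumes IH: "\<And>c b. c \<in> set cs \<Longrightarrow> wf_ptree (erase c) \<Longrightarrow> distinct (labels c) \<Longrightarrow>
      set (labels c) = {b..<b + length (labels c)} \<Longrightarrow> increasing c \<Longrightarrow> avoids213 (word c) \<Longrightarrow>
      c = mk b (erase c)"
  and wf: "\<forall>c\<in>set cs. wf_ptree (erase c) \<and> increasing c \<and> (\<forall>e\<in>set (labels c). m < e)"
  and d: "distinct (concat (map labels cs))"
  and s: "set (concat (map labels cs)) = {a..<a + length (concat (map labels cs))}"
  and av: "cs \<noteq> [] \<Longrightarrow> avoids213 (word (hd cs) @ concat (map (\<lambda>d. m # word d) (tl cs)))"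
  shows "cs = mkl a (map erase cs)"
  using assms
proof (induction cs)
  case Nil then show ?case by simp
next
  case (Cons c cs')
  define L where "L = labels c"
  define R where "R = concat (map labels cs')"
  define Z where "Z = concat (map (\<lambda>d. m # word d) cs')"
  have avc0: "avoids213 (word c @ Z)" using Cons.prems(5) unfolding Z_def by simp
  have wfc: "wf_ptree (erase c)" "increasing c" "\<forall>e\<in>set L. m < e" using Cons.prems(2) unfolding L_def by auto
  have dLR: "distinct L" "distinct R" "set L \<inter> set R = {}" using Cons.prems(3) unfolding L_def R_def by auto
  have sLR: "set L \<union> set R = {a..<a + (length L + length R)}" using Cons.prems(4) unfolding L_def R_def by simp
  have av': "cs' \<noteq> [] \<Longrightarrow> avoids213 (word (hd cs') @ concat (map (\<lambda>d. m # word d) (tl cs')))"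
  proof -
    assume "cs' \<noteq> []"
    then have "Z = m # (word (hd cs') @ concat (map (\<lambda>d. m # word d) (tl cs')))"
      unfolding Z_def by (cases cs') auto
    then have "avoids213 ((word c @ [m]) @ (word (hd cs') @ concat (map (\<lambda>d. m # word d) (tl cs'))))"
      using avc0 by simp
    then show ?thesis by (rule av_suffix)
  qed
  have block: "\<forall>e\<in>set L. \<forall>f\<in>set R. f < e"
  proof (intro ballI)
    fix e f assume e: "e \<in> set L" and f: "f \<in> set R"
    then have "cs' \<noteq> []" unfolding R_def by auto
    then obtain W where Zc: "Z = m # W" unfolding Z_def by (cases cs') auto
    from f obtain dd where dd: "dd \<in> set cs'" "f \<in> set (labels dd)" unfolding R_def by auto
    have "m < f" using Cons.prems(2) dd by auto
    moreover have "f \<in> set (word dd)" using word_labels_eq[of dd] Cons.prems(2) dd by auto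
    then have "f \<in> set Z" using dd unfolding Z_def by auto
    ultimately have fW: "f \<in> set W" using Zc by auto
    have ew: "e \<in> set (word c)" using e word_labels_eq[of c] wfc unfolding L_def by auto
    have "\<not> e < f" using av_block[of "word c" m W e f] avc0 Zc ew wfc(3) e fW by auto
    moreover have "e \<noteq> f" using dLR e f by auto
    ultimately show "f < e" by simp
  qed
  have cardR: "card (set R) = length R" using dLR distinct_card by blast
  have lenR: "length R = sum_list (map ni (map erase cs'))"
    unfolding R_def by (simp add: length_concat comp_def len_labels)
  have sR: "set R = {a..<a + length R}" using ivl_split(1)[OF sLR dLR(3) block] cardR by simp
  have sL: "set L = {a + length R..<a + length R + length L}"
    using ivl_split(2)[OF sLR dLR(3) block] cardR by (simp add: add.commute add.left_commute)
  have c: "c = mk (a + length R) (erase c)"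
    using Cons.prems(1)[of c "a + length R"] wfc dLR sL av_prefix[OF avc0] unfolding L_def by auto
  have cs': "cs' = mkl a (map erase cs')"
    apply (rule Cons.IH)
    using Cons.prems(1,2) dLR sR av' unfolding R_def by auto
  show ?case using c cs' lenR by simp
qed

lemma uniq:
  "wf_ptree (erase u) \<Longrightarrow> distinct (labels u) \<Longrightarrow> set (labels u) = {b..<b + length (labels u)} \<Longrightarrow>
   increasing u \<Longrightarrow> avoids213 (word u) \<Longrightarrow> u = mk b (erase u)"
proof (induction u arbitrary: b)
  case LLeaf then show ?case by simp
next
  case (LNode k cs)
  define R where "R = concat (map labels cs)"
  have bin: "b \<in> set (labels (LNode k cs))" using LNode.prems(3) by simp
  have kin: "k \<in> set (labels (LNode k cs))" by simp
  have kb: "k = b"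
  proof (rule ccontr)
    assume "k \<noteq> b"
    then obtain c where "c \<in> set cs" "b \<in> set (labels c)" using bin by auto
    then have "k < b" using child_gt LNode.prems(4) by blast
    moreover have "b \<le> k" using kin LNode.prems(3) by (metis atLeastLessThan_iff)
    ultimately show False by simp
  qed
  have dR: "distinct R" "k \<notin> set R" using LNode.prems(2) unfolding R_def by auto
  have sR: "set R = {Suc b..<Suc b + length R}"
  proof -
    have "insert k (set R) = {b..<b + Suc (length R)}" using LNode.prems(3) unfolding R_def by simp
    then have "set R = {b..<b + Suc (length R)} - {b}" using dR kb by auto
    also have "\<dots> = {Suc b..<Suc b + length R}" by auto
    finally show ?thesis .
  qed
  obtain c cs' where cs: "cs = c # cs'" using LNode.prems(1) by (cases cs) auto
  have "cs = mkl (Suc b) (map erase cs)"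
  proof (rule inner[where m = k])
    show "\<And>c b. c \<in> set cs \<Longrightarrow> wf_ptree (erase c) \<Longrightarrow> distinct (labels c) \<Longrightarrow>
      set (labels c) = {b..<b + length (labels c)} \<Longrightarrow> increasing c \<Longrightarrow> avoids213 (word c) \<Longrightarrow>
      c = mk b (erase c)" using LNode.IH by blast
    show "\<forall>c\<in>set cs. wf_ptree (erase c) \<and> increasing c \<and> (\<forall>e\<in>set (labels c). k < e)"
      using LNode.prems(1,4) child_gt[of k cs] by auto
    show "distinct (concat (map labels cs))" using dR(1) unfolding R_def .
    show "set (concat (map labels cs)) = {Suc b..<Suc b + length (concat (map labels cs))}"
      using sR unfolding R_def .
    show "avoids213 (word (hd cs) @ concat (map (\<lambda>d. k # word d) (tl cs)))"
      using LNode.prems(5) cs by simp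
  qed
  then show ?case using kb by simp
qed

theorem mainTheorem11:
  assumes "wf_ptree t"
  shows "GD_tree t = GD_word (word (iota t))"
proof -
  have "iota t = mk 1 t"
    unfolding iota_def
  proof (rule the_equality)
    show "gsp (mk 1 t) \<and> erase (mk 1 t) = t \<and> avoids213 (word (mk 1 t))"
      using gsp_mk[OF assms] erase_mk(1) av_mk(1) by simp
  next
    fix u assume u: "gsp u \<and> erase u = t \<and> avoids213 (word u)"
    then have "u = mk 1 (erase u)"
      by (intro uniq) (auto simp: gsp_def atLeastLessThanSuc_atLeastAtMost)
    then show "u = mk 1 t" using u by simp
  qed
  then show ?thesis using GD_mk[OF assms] by simp
qed

end
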